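(* Let $Y$ be a generic Enriques surface. For effective $\beta\in H_2(Y,\mathbb{Z})$ (modulo torsion) with $2\nmid\beta$ and $\beta^2=2d$, let $M_d$ be one of the two connected components of the moduli space of stable $1$-dimensional sheaves $F$ on $Y$ with support class $\beta$ and $\chi(F)=1$ (smooth projective of dimension $2d+1$), with Hilbert–Chow morphism $\rho:M_d\to\mathbb{P}$, perverse Hodge numbers ${}^ph^{i,j}(M_d)=\dim H^j(\mathbb{P},{}^p\mathcal{H}^i(R\rho_*\mathbb{Q}[\dim M_d]))$ and Betti numbers $b_{i,d}=b_i(M_d)$. Let \[ F(u,p,q)=\frac{(1-u^{-1}p)(1-up)}{(-p)}\prod_{m\ge1}\frac{1}{(1-q^m)^8}\prod_{\substack{m\ge1\\ m\text{ odd}}}\frac{1}{(1-u^{-2}q^m)(1-u^2q^m)(1-upq^m)(1-up^{-1}q^m)(1-u^{-1}pq^m)(1-u^{-1}p^{-1}q^m)(1-q^m)^2}. \] Assume that the ${}^ph^{i,j}(M_d)$ depend only on $d$ and that \[ \sum_{d\ge0}\sum_{i,j}{}^ph^{i,j}(M_d)(-1)^{i+j}p^iu^jq^d=F(u,p,q)-\Big(\sum_{d\ge0}u^{-(2d+1)}\sum_{i=0}^{4d+2}(-u)^ib_{i,d}\Big)\prod_{m\ge1}\frac{(1-u^2q^{2m})(1-u^{-2}q^{2m})(1-q^{2m})^2}{(1-upq^{2m})(1-u^{-1}p^{-1}q^{2m})(1-u^{-1}pq^{2m})(1-up^{-1}q^{2m})}. \] Then for all $d\ge0$ and integers $i,j$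 with $i,j<-d/2-1$, \[ {}^ph^{i,j}(M_d)(-1)^{i+j}=\mathrm{Coeff}_{p^iu^jq^d}\big[F(u,p,q)\big]. \]
   Context: $F$ equals, in the paper's notation, $\frac{(1-u^{-1}p)(1-up)}{(-p)}\frac{\Theta(u^2,q^2)}{\Theta(u^2,q)}\frac{\eta(q^2)^8}{\eta(q)^{16}}\frac{\Theta(pu,q^2)\Theta(pu^{-1},q^2)}{\Theta(pu,q)\Theta(pu^{-1},q)}$ with $\Theta(p,q)=(p^{1/2}-p^{-1/2})\prod_{m\ge1}\frac{(1-pq^m)(1-p^{-1}q^m)}{(1-q^m)^2}$ and $\eta(q)=q^{1/24}\prod_{m\ge1}(1-q^m)$. ${}^p\mathcal{H}^i$ is perverse cohomology for the middle perversity. *)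

theory Defs
  imports "HOL-Analysis.Infinite_Products" "HOL-Computational_Algebra.Formal_Laurent_Series"
begin

text \<open>Coefficient ring: Laurent series in p (outer) over Laurent series in u (inner) over Q.
  Generating series in q are formal power series over this ring; infinite products are
  the library's prodinf in the (subdegree) metric topology of fps.\<close>

type_synonym R = "rat fls fls"

definition uu :: R where "uu = fls_const fls_X"
definition pp :: R where "pp = fls_X"

definition one_minus :: "R \<Rightarrow> nat \<Rightarrow> R fps" where
  "one_minus c m = 1 - fps_const c * fps_X ^ m"

definition coeff_puq :: "R fps \<Rightarrow> int \<Rightarrow> int \<Rightarrow> nat \<Rightarrow> rat" where
  "coeff_puq G i j d = fls_nth (fls_nth (fps_nth G d) i) j"

definition F_series :: "R fps" where
  "F_series =
     fps_const ((1 - inverse uu * pp) * (1 - uu * pp) / (- pp))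
     * prodinf (\<lambda>k. inverse (one_minus 1 (k+1) ^ 8))
     * prodinf (\<lambda>k. let m = 2*k+1 in inverse
          (one_minus (inverse (uu^2)) m * one_minus (uu^2) m
           * one_minus (uu*pp) m * one_minus (uu * inverse pp) m
           * one_minus (inverse uu * pp) m * one_minus (inverse uu * inverse pp) m
           * one_minus 1 m ^ 2))"

definition G_series :: "R fps" where
  "G_series =
     prodinf (\<lambda>k. let m = 2*(k+1) in
        (one_minus (uu^2) m * one_minus (inverse (uu^2)) m * one_minus 1 m ^ 2)
        * inverse (one_minus (uu*pp) m * one_minus (inverse uu * inverse pp) m
                   * one_minus (inverse uu * pp) m * one_minus (uu * inverse pp) m))"

text \<open>sum_{d>=0} u^{-(2d+1)} sum_{i=0}^{4d+2} (-u)^i b_{i,d} q^d, with b d i = b_i(M_d).\<close>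
definition betti_series :: "(nat \<Rightarrow> nat \<Rightarrow> nat) \<Rightarrow> R fps" where
  "betti_series b = Abs_fps (\<lambda>d. inverse (uu ^ (2*d+1)) *
      (\<Sum>i=0..4*d+2. (- uu) ^ i * of_nat (b d i)))"

end

theory Submission
  imports Defs
begin

no_notation vec_nth (infixl "$" 90)

definition V :: "R \<Rightarrow> nat \<Rightarrow> bool" where
  "V x n \<longleftrightarrow> (\<forall>i. 2*i + int n < 0 \<longrightarrow> fls_nth x i = 0)"

lemma V_sub: "V x n \<Longrightarrow> x \<noteq> 0 \<Longrightarrow> 2 * fls_subdegree x + int n \<ge> 0"
  unfolding V_def by (metis linorder_not_le nth_fls_subdegree_nonzero)

lemma V_mult: assumes "V x a" "V y b" shows "V (x*y) (a+b)"
proof (cases "x = 0 \<or> y = 0")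
  case True then show ?thesis by (auto simp: V_def)
next
  case False
  then have "2 * fls_subdegree (x*y) + int (a+b) \<ge> 0"
    using V_sub[OF assms(1)] V_sub[OF assms(2)] by simp
  then show ?thesis unfolding V_def by (intro allI impI fls_eq0_below_subdegree) linarith
qed

lemma V_mono: "V x a \<Longrightarrow> a \<le> b \<Longrightarrow> V x b"
  unfolding V_def by auto

lemma V_add: "V x a \<Longrightarrow> V y a \<Longrightarrow> V (x+y) a"
  unfolding V_def by auto

lemma V_diff: "V x a \<Longrightarrow> V y a \<Longrightarrow> V (x-y) a"
  unfolding V_def by auto

lemma V_uminus: "V x a \<Longrightarrow> V (-x) a"
  unfolding V_def by auto

lemma V_zero: "V 0 a" unfolding V_def by auto

lemma V_sum: "(\<And>i. i \<in> A \<Longrightarrow> V (f i) a) \<Longrightarrow> V (sum f A) a"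
  by (induction A rule: infinite_finite_induct) (auto simp: V_zero V_add)

lemma V_const: "V (fls_const c) a"
  unfolding V_def by auto

lemma V_one: "V 1 a"
  using V_const[of 1] by simp

lemma V_power: "V x 0 \<Longrightarrow> V (x^k) 0"
  by (induction k) (auto simp: V_one dest: V_mult)

lemma V_of_nat: "V (of_nat k) a"
  by (induction k) (auto simp: V_zero V_one V_add)

lemma V_uu: "V uu 0" unfolding uu_def by (rule V_const)
lemma V_inv_uu: "V (inverse uu) 0" unfolding uu_def by (simp add: fls_inverse_const V_const)
lemma V_pp: "V pp 0" unfolding pp_def V_def by auto
lemma V_inv_pp: "V (inverse pp) 2" unfolding pp_def V_def by (auto simp: fls_inverse_X)

definition PP :: "R fps \<Rightarrow> bool" where
  "PP H \<longleftrightarrow> (\<forall>n. V (H $ n) n)"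

lemma PP_mult: assumes "PP A" "PP B" shows "PP (A*B)"
  unfolding PP_def
proof
  fix n
  show "V ((A*B) $ n) n"
    unfolding fps_mult_nth
  proof (rule V_sum)
    fix i assume "i \<in> {0..n}"
    then have "V (A$i * B$(n-i)) (i + (n-i))"
      using assms unfolding PP_def by (intro V_mult) auto
    then show "V (A$i * B$(n-i)) n" using \<open>i \<in> {0..n}\<close> by simp
  qed
qed

lemma PP_one: "PP 1"
  unfolding PP_def by (auto simp: V_one V_zero)

lemma PP_power: "PP A \<Longrightarrow> PP (A^k)"
  by (induction k) (auto simp: PP_one PP_mult)

lemma PP_one_minus: "V c m \<Longrightarrow> PP (one_minus c m)"
  unfolding PP_def one_minus_def
  by (auto simp: V_one V_zero V_diff V_uminus fps_X_power_nth)

lemma sum_split_last: "(\<Sum>i=0..n. f i) = f n + (\<Sum>i<n. f i)" for f :: "nat \<Rightarrow> 'a::comm_monoid_add"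
  by (metis add.commute atLeast0AtMost lessThan_Suc_atMost sum.lessThan_Suc)

lemma inverse_rec:
  fixes B :: "R fps"
  assumes "B $ 0 = 1" "n > 0"
  shows "inverse B $ n = - (\<Sum>i<n. inverse B $ i * B $ (n-i))"
proof -
  have "inverse B * B = 1" using assms by (intro inverse_mult_eq_1) simp
  then have "(inverse B * B) $ n = 0" using assms by simp
  then have "inverse B $ n * B $ 0 + (\<Sum>i<n. inverse B $ i * B $ (n-i)) = 0"
    unfolding fps_mult_nth sum_split_last by simp
  then show ?thesis using assms(1) by (simp add: eq_neg_iff_add_eq_0)
qed

lemma PP_inverse: assumes "PP B" "B $ 0 = 1" shows "PP (inverse B)"
  unfolding PP_def
proof
  fix n show "V (inverse B $ n) n"
  proof (induction n rule: less_induct)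
    case (less n)
    show ?case
    proof (cases "n = 0")
      case True then show ?thesis using assms by (simp add: V_one)
    next
      case False
      have "V (\<Sum>i<n. inverse B $ i * B $ (n-i)) n"
      proof (rule V_sum)
        fix i assume "i \<in> {..<n}"
        then have "V (inverse B $ i * B $ (n-i)) (i + (n-i))"
          using assms less unfolding PP_def by (intro V_mult) auto
        then show "V (inverse B $ i * B $ (n-i)) n" using \<open>i \<in> {..<n}\<close> by simp
      qed
      then show ?thesis using False inverse_rec[OF assms(2)] by (simp add: V_uminus)
    qed
  qed
qed

definition S :: "nat \<Rightarrow> R fps \<Rightarrow> bool" where
  "S m f \<longleftrightarrow> f $ 0 = 1 \<and> (\<forall>j. 0 < j \<longrightarrow> j < m \<longrightarrow> f $ j = 0)"

lemma S_mult: assumes "S m f" "S m g" shows "S m (f*g)"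
  unfolding S_def
proof safe
  show "(f*g) $ 0 = 1" using assms by (simp add: S_def)
next
  fix j :: nat assume j: "0 < j" "j < m"
  show "(f*g) $ j = 0"
    unfolding fps_mult_nth
  proof (rule sum.neutral, safe)
    fix i assume "i \<in> {0..j}"
    then show "f $ i * g $ (j-i) = 0"
      using assms j unfolding S_def by (cases "i = 0") auto
  qed
qed

lemma S_one: "S m 1" unfolding S_def by auto

lemma S_power: "S m f \<Longrightarrow> S m (f^k)"
  by (induction k) (auto simp: S_one S_mult)

lemma S_inverse: assumes "S m f" shows "S m (inverse f)"
  unfolding S_def
proof safe
  show "inverse f $ 0 = 1" using assms by (simp add: S_def)
next
  fix j :: nat assume j: "0 < j" "j < m"
  have "(\<Sum>i<j. inverse f $ i * f $ (j-i)) = 0"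
    by (rule sum.neutral) (use assms j in \<open>auto simp: S_def\<close>)
  then show "inverse f $ j = 0"
    using inverse_rec[of f j] assms j by (simp add: S_def)
qed

lemma S_one_minus: "0 < m \<Longrightarrow> S m (one_minus c m)"
  unfolding S_def one_minus_def by (auto simp: fps_X_power_nth)

lemma PP_prodinf:
  fixes f :: "nat \<Rightarrow> R fps"
  assumes PPf: "\<And>k. PP (f k)" and Sf: "\<And>k. S (Suc k) (f k)"
  shows "PP (prodinf f)"
proof -
  define P where "P N = (\<Prod>i\<le>N. f i)" for N
  have stab: "n \<le> N \<Longrightarrow> P N $ n = P n $ n" for n N
  proof (induction N arbitrary: n)
    case 0 then show ?case by simp
  next
    case (Suc N)
    show ?case
    proof (cases "n = Suc N")
      case True then show ?thesis by simp
    next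
      case False
      then have nN: "n \<le> N" using Suc by simp
      have "P (Suc N) $ n = (P N * f (Suc N)) $ n" by (simp add: P_def)
      also have "\<dots> = P N $ n * f (Suc N) $ 0 + (\<Sum>i<n. P N $ i * f (Suc N) $ (n-i))"
        unfolding fps_mult_nth sum_split_last by simp
      also have "(\<Sum>i<n. P N $ i * f (Suc N) $ (n-i)) = 0"
        by (rule sum.neutral) (use Sf[of "Suc N"] nN in \<open>auto simp: S_def\<close>)
      also have "f (Suc N) $ 0 = 1" using Sf[of "Suc N"] by (simp add: S_def)
      finally show ?thesis using Suc.IH[OF nN] by simp
    qed
  qed
  define L where "L = Abs_fps (\<lambda>n. P n $ n)"
  have lim: "P \<longlonglongrightarrow> L"
    by (rule tendsto_fpsI) (auto simp: L_def eventually_sequentially intro!: exI stab)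
  have S0: "S 1 (P N)" for N
    unfolding P_def
  proof (induction N)
    case 0 then show ?case using Sf[of 0] by simp
  next
    case (Suc N)
    have "S 1 (f (Suc N))" using Sf[of "Suc N"] by (auto simp: S_def)
    then show ?case using Suc by (simp add: S_mult)
  qed
  have "L $ 0 = 1" using S0[of 0] by (simp add: L_def S_def)
  then have "L \<noteq> 0" by auto
  with lim have "raw_has_prod f 0 L" unfolding raw_has_prod_def P_def by simp
  then have "f has_prod L" unfolding has_prod_def by simp
  then have eq: "prodinf f = L" using has_prod_unique by metis
  have PPP: "PP (P N)" for N
    unfolding P_def by (induction N) (auto simp: PP_one PP_mult PPf)
  show ?thesis unfolding eq PP_def L_def using PPP unfolding PP_def by simp
qed

lemma V_mult_simp: "V x a \<Longrightarrow> V y b \<Longrightarrow> c = a + b \<Longrightarrow> V (x*y) c"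
  using V_mult by simp

lemma V2: "V x 0 \<Longrightarrow> V x (2 * Suc k)" by (rule V_mono) auto
lemma V2': "V x 2 \<Longrightarrow> V x (2 * Suc k)" by (rule V_mono) auto

lemma PP_G: "PP G_series"
  unfolding G_series_def
proof (rule PP_prodinf)
  fix k
  let ?m = "2 * Suc k"
  have a0: "\<And>x. V x 0 \<Longrightarrow> V x ?m" by (erule V_mono) simp
  have a2: "\<And>x. V x 2 \<Longrightarrow> V x ?m" by (erule V_mono) simp
  have Vs: "V (uu^2) ?m" "V (inverse (uu^2)) ?m" "V 1 ?m" "V (uu*pp) ?m"
       "V (inverse uu * inverse pp) ?m" "V (inverse uu * pp) ?m" "V (uu * inverse pp) ?m"
    using a2[OF V_mult_simp[OF V_inv_uu V_inv_pp, of 2, simplified]] a2[OF V_mult_simp[OF V_uu V_inv_pp, of 2, simplified]]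
      a0[OF V_mult_simp[OF V_uu V_pp, of 0, simplified]] a0[OF V_mult_simp[OF V_inv_uu V_pp, of 0, simplified]]
      a0[OF V_power[OF V_uu, of 2]] a0[OF V_power[OF V_inv_uu, of 2]] V_one
    by (auto simp: power_inverse)
  have m0: "(0::nat) < ?m" by simp
  have O0: "one_minus c ?m $ 0 = 1" for c unfolding one_minus_def by simp
  show "PP (let m = 2 * (k + 1) in
          one_minus (uu\<^sup>2) m * one_minus (inverse (uu\<^sup>2)) m * one_minus 1 m ^ 2 *
          inverse (one_minus (uu * pp) m * one_minus (inverse uu * inverse pp) m *
             one_minus (inverse uu * pp) m * one_minus (uu * inverse pp) m))"
    unfolding Let_def
    apply (intro PP_mult PP_power PP_inverse PP_one_minus)
    using Vs by (simp_all add: one_minus_def)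
  have Sm: "S ?m (one_minus c ?m)" for c by (rule S_one_minus) simp
  have "S ?m (let m = 2 * (k + 1) in
          one_minus (uu\<^sup>2) m * one_minus (inverse (uu\<^sup>2)) m * one_minus 1 m ^ 2 *
          inverse (one_minus (uu * pp) m * one_minus (inverse uu * inverse pp) m *
             one_minus (inverse uu * pp) m * one_minus (uu * inverse pp) m))"
    unfolding Let_def by (intro S_mult S_power S_inverse) (simp_all add: S_one_minus)
  then show "S (Suc k) (let m = 2 * (k + 1) in
          one_minus (uu\<^sup>2) m * one_minus (inverse (uu\<^sup>2)) m * one_minus 1 m ^ 2 *
          inverse (one_minus (uu * pp) m * one_minus (inverse uu * inverse pp) m *
             one_minus (inverse uu * pp) m * one_minus (uu * inverse pp) m))"
    unfolding S_def by auto
qed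

lemma PP_betti: "PP (betti_series b)"
  unfolding PP_def betti_series_def
proof
  fix d
  have "V (inverse (uu ^ (2*d+1)) * (\<Sum>i=0..4*d+2. (- uu) ^ i * of_nat (b d i))) (0+0)"
    by (intro V_mult V_sum)
       (auto simp: power_inverse[symmetric] V_power V_inv_uu V_uu V_uminus V_of_nat
             intro!: V_mult[where a=0 and b=0, simplified] V_power)
  then show "V (Abs_fps (\<lambda>d. inverse (uu ^ (2 * d + 1)) * (\<Sum>i = 0..4 * d + 2. (- uu) ^ i * of_nat (b d i))) $ d) d"
    by (auto intro: V_mono)
qed

theorem lemma3p8:
  fixes ph :: "nat \<Rightarrow> int \<Rightarrow> int \<Rightarrow> nat"
    and b :: "nat \<Rightarrow> nat \<Rightarrow> nat"
  assumes gen: "\<And>d i j. of_nat (ph d i j) * (-1) powi (i + j)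
                  = coeff_puq (F_series - betti_series b * G_series) i j d"
  shows "\<And>d i j. of_int i < - of_nat d / 2 - (1::rat) \<Longrightarrow> of_int j < - of_nat d / 2 - (1::rat) \<Longrightarrow>
           of_nat (ph d i j) * (-1) powi (i + j) = coeff_puq F_series i j d"
proof -
  fix d i j
  assume hi: "of_int i < - of_nat d / 2 - (1::rat)"
  have "rat_of_int (2*i + int d) < 0" using hi by simp
  then have lt: "2*i + int d < 0" by simp
  have "PP (betti_series b * G_series)" by (intro PP_mult PP_betti PP_G)
  then have "fls_nth ((betti_series b * G_series) $ d) i = 0" using lt unfolding PP_def V_def by auto
  then show "of_nat (ph d i j) * (-1) powi (i + j) = coeff_puq F_series i j d"
    using gen[of d i j] by (simp add: coeff_puq_def)
qed

end
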